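(* Let $\tilde{\boldsymbol\Gamma}^\omega$ denote the fundamental solution $\boldsymbol\Gamma^\omega$ with the parameters $(\lambda,\mu,\rho)$ replaced by $(\tilde\lambda,\tilde\mu,\tilde\rho)=(\lambda/\delta,\mu/\delta,\rho/\epsilon)$, and let $\tau=\sqrt{\delta/\epsilon}$. Then as $\omega\to0^+$, $$\tilde{\boldsymbol\Gamma}^\omega(\mathbf{x})=\delta\boldsymbol\Gamma(\mathbf{x})+\delta\gamma_{\tau\omega}\mathbf{I}_2+\delta\omega^2\ln\omega\,\rho\tau^2\boldsymbol\Gamma_1(\mathbf{x})+\delta\omega^2\rho\tau^2\ln(\sqrt\rho\tau)\boldsymbol\Gamma_1(\mathbf{x})+\delta\omega^2\rho\tau^2\boldsymbol\Gamma_2(\mathbf{x})+\mathcal{O}(\delta\tau^4\omega^4\ln\omega+\delta\tau^4\omega^4),$$ where $\gamma_{\tau\omega}=\alpha_1\ln(\sqrt\rho\tau\omega)+\alpha$.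
   Context: Lamé constants $\lambda,\mu$, density $\rho>0$, $\delta,\epsilon>0$. For parameters $(\lambda,\mu,\rho)$, $c_s=\sqrt{\mu/\rho}$, $c_p=\sqrt{(\lambda+2\mu)/\rho}$, $k_s=\omega/c_s$, $k_p=\omega/c_p$, and $\boldsymbol\Gamma^\omega(\mathbf{x})=-\frac{\mathrm{i}}{4\mu}H_0^{(1)}(k_s|\mathbf{x}|)\mathbf{I}_2+\frac{\mathrm{i}}{4\omega^2\rho}\nabla\nabla\big(H_0^{(1)}(k_p|\mathbf{x}|)-H_0^{(1)}(k_s|\mathbf{x}|)\big)$. $\boldsymbol\Gamma(\mathbf{x})=\alpha_1\ln|\mathbf{x}|\mathbf{I}_2-\alpha_2\frac{\mathbf{x}\mathbf{x}^T}{|\mathbf{x}|^2}$, $\alpha_1=\frac1{4\pi}(\frac1\mu+\frac1{2\mu+\lambda})$, $\alpha_2=\frac1{4\pi}(\frac1\mu-\frac1{2\mu+\lambda})$; $E_c=2\gamma-\mathrm{i}\pi-2\ln2$; $\alpha=\frac{\alpha_1}2E_c+\frac{\alpha_2}2-\frac1{8\pi}(\frac1\mu\ln\mu+\frac1{2\mu+\lambda}\ln(2\mu+\lambda))$. $\boldsymbol\Gamma_1(\mathbf{x})=\beta_2|\mathbf{x}|^2\mathbf{I}_2+\beta_3\mathbf{x}\mathbf{x}^T$, $\boldsymbol\Gamma_2(\mathbf{x})=\beta_1|\mathbf{x}|^2\mathbf{I}_2+\beta_2\ln|\mathbf{x}||\mathbf{x}|^2\mathbf{I}_2+\beta_3\ln|\mathbf{x}|\mathbf{x}\mathbf{x}^T+\beta_4\mathbf{x}\mathbf{x}^T$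 with $\beta_2=-\frac1{2^5\pi}(\frac3{\mu^2}+\frac1{(2\mu+\lambda)^2})$, $\beta_3=\frac1{2^4\pi}(\frac1{\mu^2}-\frac1{(2\mu+\lambda)^2})$, $\beta_1=(\frac12E_c-1)\beta_2-\frac18\beta_3+\frac1{2^6\pi}(\frac3{\mu^2}\ln\mu+\frac{\ln(2\mu+\lambda)}{(2\mu+\lambda)^2})$, $\beta_4=\frac14(2E_c-3)\beta_3-\frac1{2^5\pi}(\frac{\ln\mu}{\mu^2}-\frac{\ln(2\mu+\lambda)}{(2\mu+\lambda)^2})$ (all with the unscaled $\lambda,\mu$). *)

theory Defs
  imports "HOL-Analysis.Analysis"
begin

definition bessel_J0 :: "real \<Rightarrow> real" where
  "bessel_J0 z = (\<Sum>k. (-1) ^ k * (z / 2) ^ (2 * k) / (fact k) ^ 2)"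

definition bessel_Y0 :: "real \<Rightarrow> real" where
  "bessel_Y0 z = (2 / pi) * (ln (z / 2) + euler_mascheroni) * bessel_J0 z
     + (2 / pi) * (\<Sum>k. (-1) ^ (k + 2) * harm (k + 1) * (z / 2) ^ (2 * (k + 1)) / (fact (k + 1)) ^ 2)"

definition hankel1_0 :: "real \<Rightarrow> complex" where
  "hankel1_0 z = Complex (bessel_J0 z) (bessel_Y0 z)"

definition partial_deriv :: "2 \<Rightarrow> (real^2 \<Rightarrow> complex) \<Rightarrow> real^2 \<Rightarrow> complex" where
  "partial_deriv i g x = vector_derivative (\<lambda>t. g (x + t *\<^sub>R axis i 1)) (at 0)"

definition hessian :: "(real^2 \<Rightarrow> complex) \<Rightarrow> real^2 \<Rightarrow> complex^2^2" where
  "hessian g x = (\<chi> i j. partial_deriv i (partial_deriv j g) x)"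

definition Gamma_omega :: "real \<Rightarrow> real \<Rightarrow> real \<Rightarrow> real \<Rightarrow> real^2 \<Rightarrow> complex^2^2" where
  "Gamma_omega lam mu rho \<omega> x =
     (let cs = sqrt (mu / rho); cp = sqrt ((lam + 2 * mu) / rho);
          ks = \<omega> / cs; kp = \<omega> / cp;
          H = hessian (\<lambda>y. hankel1_0 (kp * norm y) - hankel1_0 (ks * norm y)) x
      in (\<chi> i j. - (\<i> / (4 * complex_of_real mu)) * hankel1_0 (ks * norm x) * (if i = j then 1 else 0)
                  + \<i> / (4 * complex_of_real (\<omega>^2 * rho)) * H $ i $ j))"

definition alpha1 :: "real \<Rightarrow> real \<Rightarrow> real" where
  "alpha1 lam mu = 1 / (4 * pi) * (1 / mu + 1 / (2 * mu + lam))"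

definition alpha2 :: "real \<Rightarrow> real \<Rightarrow> real" where
  "alpha2 lam mu = 1 / (4 * pi) * (1 / mu - 1 / (2 * mu + lam))"

definition E_c :: complex where
  "E_c = 2 * euler_mascheroni - \<i> * pi - 2 * ln 2"

definition alpha_const :: "real \<Rightarrow> real \<Rightarrow> complex" where
  "alpha_const lam mu = alpha1 lam mu / 2 * E_c + alpha2 lam mu / 2
     - 1 / (8 * pi) * (1 / mu * ln mu + 1 / (2 * mu + lam) * ln (2 * mu + lam))"

definition Gamma0 :: "real \<Rightarrow> real \<Rightarrow> real^2 \<Rightarrow> complex^2^2" where
  "Gamma0 lam mu x = (\<chi> i j. complex_of_real
     (alpha1 lam mu * ln (norm x) * (if i = j then 1 else 0)
      - alpha2 lam mu * (x $ i * x $ j) / (norm x)^2))"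

definition beta2 :: "real \<Rightarrow> real \<Rightarrow> real" where
  "beta2 lam mu = - 1 / (2^5 * pi) * (3 / mu^2 + 1 / (2 * mu + lam)^2)"

definition beta3 :: "real \<Rightarrow> real \<Rightarrow> real" where
  "beta3 lam mu = 1 / (2^4 * pi) * (1 / mu^2 - 1 / (2 * mu + lam)^2)"

definition beta1 :: "real \<Rightarrow> real \<Rightarrow> complex" where
  "beta1 lam mu = (E_c / 2 - 1) * beta2 lam mu - beta3 lam mu / 8
     + 1 / (2^6 * pi) * (3 / mu^2 * ln mu + ln (2 * mu + lam) / (2 * mu + lam)^2)"

definition beta4 :: "real \<Rightarrow> real \<Rightarrow> complex" where
  "beta4 lam mu = 1 / 4 * (2 * E_c - 3) * beta3 lam mu
     - 1 / (2^5 * pi) * (ln mu / mu^2 - ln (2 * mu + lam) / (2 * mu + lam)^2)"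

definition Gamma1 :: "real \<Rightarrow> real \<Rightarrow> real^2 \<Rightarrow> complex^2^2" where
  "Gamma1 lam mu x = (\<chi> i j. complex_of_real
     (beta2 lam mu * (norm x)^2 * (if i = j then 1 else 0) + beta3 lam mu * (x $ i * x $ j)))"

definition Gamma2 :: "real \<Rightarrow> real \<Rightarrow> real^2 \<Rightarrow> complex^2^2" where
  "Gamma2 lam mu x = (\<chi> i j.
     beta1 lam mu * (norm x)^2 * (if i = j then 1 else 0)
     + beta2 lam mu * ln (norm x) * (norm x)^2 * (if i = j then 1 else 0)
     + beta3 lam mu * ln (norm x) * (x $ i * x $ j)
     + beta4 lam mu * (x $ i * x $ j))"

end

theory Submission
  imports Defs "HOL-Library.Landau_Symbols" "HOL-Real_Asymp.Real_Asymp"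
begin


definition pc :: "nat \<Rightarrow> real" where "pc n = (-1)^n / (4^n * (fact n)^2)"
definition qc :: "nat \<Rightarrow> real" where
  "qc n = (if n = 0 then 0 else (-1)^(n+1) * harm n / (4^n * (fact n)^2))"
definition PS :: "(nat \<Rightarrow> real) \<Rightarrow> real \<Rightarrow> real" where "PS c s = (\<Sum>n. c n * s^n)"

definition entire :: "(nat \<Rightarrow> real) \<Rightarrow> bool" where
  "entire c \<longleftrightarrow> (\<forall>s. summable (\<lambda>n. c n * s^n))"

lemma entire_bound:
  assumes "\<And>n. \<bar>c n\<bar> \<le> 1 / fact n"
  shows "entire c"
  unfolding entire_def
proof
  fix s :: real
  have "summable (\<lambda>n. inverse (fact n) * \<bar>s\<bar>^n)" by (rule summable_exp)
  moreover have "norm (c n * s^n) \<le> inverse (fact n) * \<bar>s\<bar>^n" for n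
  proof -
    have "norm (c n * s^n) = \<bar>c n\<bar> * \<bar>s\<bar>^n" by (simp add: abs_mult power_abs)
    also have "\<dots> \<le> (1 / fact n) * \<bar>s\<bar>^n"
      by (rule mult_right_mono[OF assms]) simp
    finally show ?thesis by (simp add: divide_inverse)
  qed
  ultimately show "summable (\<lambda>n. c n * s^n)"
    by (rule summable_comparison_test'[where N=0])
qed

lemma entire_diffs: "entire c \<Longrightarrow> entire (diffs c)"
  unfolding entire_def by (blast intro: termdiff_converges_all)

lemma PS_deriv: "entire c \<Longrightarrow> (PS c has_real_derivative PS (diffs c) s) (at s)"
  unfolding PS_def entire_def by (rule termdiffs_strong_converges_everywhere) blast

lemma harm_le_n: "harm n \<le> (real n)"
proof (induction n)
  case 0 then show ?case by (simp add: harm_altdef)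
next
  case (Suc n)
  have "inverse (real (Suc n)) \<le> 1" by (simp add: inverse_le_1_iff)
  with Suc show ?case by (simp add: harm_Suc)
qed

lemma fact_ge_self: "real n \<le> fact n"
  by (metis fact_ge_self of_nat_fact of_nat_le_iff)

lemma entire_pc: "entire pc"
proof (rule entire_bound)
  fix n
  have f1: "(1::real) \<le> fact n" by simp
  have "\<bar>pc n\<bar> = 1 / (4^n * (fact n)^2)" by (simp add: pc_def abs_mult power_abs)
  also have "\<dots> \<le> 1 / fact n"
  proof (rule divide_left_mono)
    have "fact n \<le> (fact n :: real)^2" using f1 by (simp add: power2_eq_square)
    also have "\<dots> \<le> 4^n * (fact n)^2" using f1 by simp
    finally show "fact n \<le> 4 ^ n * (fact n :: real)\<^sup>2" .
  qed (use f1 in auto)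
  finally show "\<bar>pc n\<bar> \<le> 1 / fact n" .
qed

lemma entire_qc: "entire qc"
proof (rule entire_bound)
  fix n
  have f1: "(1::real) \<le> fact n" by simp
  show "\<bar>qc n\<bar> \<le> 1 / fact n"
  proof (cases "n = 0")
    case True then show ?thesis by (simp add: qc_def)
  next
    case False
    have h0: "0 \<le> (harm n :: real)" by (rule harm_nonneg)
    have "\<bar>qc n\<bar> = harm n / (4^n * (fact n)^2)"
      using False h0 by (simp add: qc_def abs_mult power_abs)
    also have "\<dots> \<le> fact n / (4^n * (fact n)^2)"
      using harm_le_n[of n] fact_ge_self[of n] by (intro divide_right_mono) auto
    also have "\<dots> \<le> 1 / fact n"
      using f1 by (simp add: field_simps power2_eq_square)
    finally show ?thesis .
  qed
qed

lemma half_pow: "(z/2)^(2*k) = (z^2)^k / (4::real)^k"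
proof -
  have "(z/2)^(2*k) = ((z/2)^2)^k" by (simp add: power_mult)
  also have "(z/2)^2 = z^2/4" by (simp add: power_divide)
  finally show ?thesis by (simp add: power_divide)
qed

lemma J0_PS: "bessel_J0 z = PS pc (z^2)"
  unfolding bessel_J0_def PS_def pc_def
  by (rule suminf_cong) (simp add: half_pow)

lemma Y0_PS: "bessel_Y0 z = (2 / pi) * (ln (z / 2) + euler_mascheroni) * PS pc (z^2) + (2/pi) * PS qc (z^2)"
proof -
  have s: "summable (\<lambda>n. qc n * (z^2)^n)" using entire_qc by (simp add: entire_def)
  have "(\<Sum>k. (-1) ^ (k + 2) * harm (k + 1) * (z / 2) ^ (2 * (k + 1)) / (fact (k + 1)) ^ 2)
      = (\<Sum>k. qc (Suc k) * (z^2)^(Suc k))"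
    by (rule suminf_cong) (simp only: half_pow[of z "k+1" for k], simp add: qc_def)
  also have "\<dots> = PS qc (z^2)"
    using suminf_split_head[OF s] by (simp add: PS_def qc_def)
  finally show ?thesis unfolding bessel_Y0_def J0_PS by simp
qed



lemma line_sq_deriv:
  fixes y a :: "real^2"
  shows "((\<lambda>t. (y + t *\<^sub>R a) \<bullet> (y + t *\<^sub>R a)) has_vector_derivative (2 * (y \<bullet> a) + 2 * t * (a \<bullet> a))) (at t)"
proof -
  have e: "(\<lambda>t. (y + t *\<^sub>R a) \<bullet> (y + t *\<^sub>R a)) = (\<lambda>t. y \<bullet> y + 2 * t * (y \<bullet> a) + t^2 * (a \<bullet> a))"
    by (rule ext) (simp add: inner_add_left inner_add_right inner_commute power2_eq_square algebra_simps)
  have "((\<lambda>t. y \<bullet> y + 2 * t * (y \<bullet> a) + t^2 * (a \<bullet> a)) has_real_derivative (2 * (y \<bullet> a) + 2 * t * (a \<bullet> a))) (at t)"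
    by (auto intro!: derivative_eq_intros simp: algebra_simps)
  then show ?thesis unfolding e by (simp add: has_real_derivative_iff_has_vector_derivative)
qed

lemma partial_radial:
  fixes G G1 :: "real \<Rightarrow> complex" and y :: "real^2"
  assumes "y \<noteq> 0"
    and d1: "\<And>s. s > 0 \<Longrightarrow> (G has_vector_derivative G1 s) (at s)"
  shows "partial_deriv j (\<lambda>y. G (y \<bullet> y)) y = of_real (2 * y $ j) * G1 (y \<bullet> y)"
proof -
  let ?l = "\<lambda>t. (y + t *\<^sub>R axis j 1) \<bullet> (y + t *\<^sub>R axis j 1)"
  have l: "(?l has_vector_derivative (2 * y $ j)) (at 0)"
    using line_sq_deriv[of y "axis j 1" 0] by (simp add: inner_axis)
  have "y \<bullet> y > 0" using assms(1) by simp
  then have g: "(G has_vector_derivative G1 (?l 0)) (at (?l 0))" using d1 by simp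
  have "((G \<circ> ?l) has_vector_derivative ((2 * y $ j) *\<^sub>R G1 (?l 0))) (at 0)"
    by (rule vector_diff_chain_at[OF l g])
  then show ?thesis
    unfolding partial_deriv_def by (simp add: vector_derivative_at o_def scaleR_conv_of_real)
qed

lemma hessian_radial:
  fixes G G1 G2 :: "real \<Rightarrow> complex" and x :: "real^2"
  assumes "x \<noteq> 0"
    and d1: "\<And>s. s > 0 \<Longrightarrow> (G has_vector_derivative G1 s) (at s)"
    and d2: "\<And>s. s > 0 \<Longrightarrow> (G1 has_vector_derivative G2 s) (at s)"
  shows "hessian (\<lambda>y. G (y \<bullet> y)) x $ i $ j =
     of_real (2 * (if i = j then 1 else 0)) * G1 (x \<bullet> x) + of_real (4 * (x $ i * x $ j)) * G2 (x \<bullet> x)"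
proof -
  let ?p = "\<lambda>t. x + t *\<^sub>R axis i 1"
  let ?l = "\<lambda>t. ?p t \<bullet> ?p t"
  let ?F = "\<lambda>t. of_real (2 * (x $ j + t * (if i = j then 1 else 0))) * G1 (?l t)"
  have eq: "partial_deriv j (\<lambda>y. G (y \<bullet> y)) (?p t) = ?F t" if "t \<in> ball 0 (norm x)" for t
  proof -
    have "?p t \<noteq> 0"
    proof
      assume "?p t = 0"
      then have "x = - (t *\<^sub>R axis i 1)" by (simp add: eq_neg_iff_add_eq_0)
      then have "norm x = \<bar>t\<bar>" by simp
      with that show False by simp
    qed
    then show ?thesis using partial_radial[OF _ d1, of "?p t" j]
      by (simp add: axis_def)
  qed
  have l: "(?l has_vector_derivative (2 * x $ i)) (at 0)"
    using line_sq_deriv[of x "axis i 1" 0] by (simp add: inner_axis)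
  have "x \<bullet> x > 0" using assms(1) by simp
  then have g: "(G1 has_vector_derivative G2 (?l 0)) (at (?l 0))" using d2 by simp
  have c: "((G1 \<circ> ?l) has_vector_derivative ((2 * x $ i) *\<^sub>R G2 (?l 0))) (at 0)"
    by (rule vector_diff_chain_at[OF l g])
  have lin: "((\<lambda>t. of_real (2 * (x $ j + t * (if i = j then 1 else 0))) :: complex)
      has_vector_derivative of_real (2 * (if i = j then 1 else 0))) (at 0)"
    by (auto intro!: derivative_eq_intros)
  have "(?F has_vector_derivative
      (of_real (2 * (x $ j + 0 * (if i = j then 1 else 0))) * ((2 * x $ i) *\<^sub>R G2 (?l 0))
       + of_real (2 * (if i = j then 1 else 0)) * (G1 \<circ> ?l) 0)) (at 0)"
    using has_vector_derivative_mult[OF lin c] by (simp add: o_def)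
  then have "((\<lambda>t. partial_deriv j (\<lambda>y. G (y \<bullet> y)) (?p t)) has_vector_derivative
      (of_real (2 * (x $ j + 0 * (if i = j then 1 else 0))) * ((2 * x $ i) *\<^sub>R G2 (?l 0))
       + of_real (2 * (if i = j then 1 else 0)) * (G1 \<circ> ?l) 0)) (at 0)"
    by (rule has_vector_derivative_transform_within_open[where S="ball 0 (norm x)"])
       (use assms(1) eq in auto)
  then have "partial_deriv i (partial_deriv j (\<lambda>y. G (y \<bullet> y))) x =
      (of_real (2 * (x $ j + 0 * (if i = j then 1 else 0))) * ((2 * x $ i) *\<^sub>R G2 (?l 0))
       + of_real (2 * (if i = j then 1 else 0)) * (G1 \<circ> ?l) 0)"
    unfolding partial_deriv_def[of i "partial_deriv j (\<lambda>y. G (y \<bullet> y))" x]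
    by (rule vector_derivative_at)
  then show ?thesis
    unfolding hessian_def by (simp add: scaleR_conv_of_real algebra_simps)
qed



definition cL :: "real \<Rightarrow> real" where "cL u = ln u / 2 - ln 2 + euler_mascheroni"
abbreviation "P0 \<equiv> PS pc"
abbreviation "P1 \<equiv> PS (diffs pc)"
abbreviation "P2 \<equiv> PS (diffs (diffs pc))"
abbreviation "Q0 \<equiv> PS qc"
abbreviation "Q1 \<equiv> PS (diffs qc)"
abbreviation "Q2 \<equiv> PS (diffs (diffs qc))"

definition Br :: "real \<Rightarrow> real" where "Br u = 2 / pi * (cL u * P0 u + Q0 u)"
definition Br1 :: "real \<Rightarrow> real" where
  "Br1 u = 2 / pi * (P0 u / (2 * u) + cL u * P1 u + Q1 u)"
definition Br2 :: "real \<Rightarrow> real" where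
  "Br2 u = 2 / pi * (- P0 u / (2 * u^2) + P1 u / u + cL u * P2 u + Q2 u)"

definition Hk :: "real \<Rightarrow> complex" where "Hk u = Complex (P0 u) (Br u)"
definition Hk1 :: "real \<Rightarrow> complex" where "Hk1 u = Complex (P1 u) (Br1 u)"
definition Hk2 :: "real \<Rightarrow> complex" where "Hk2 u = Complex (P2 u) (Br2 u)"

lemmas entire_all = entire_pc entire_qc entire_diffs[OF entire_pc] entire_diffs[OF entire_qc]
   entire_diffs[OF entire_diffs[OF entire_pc]] entire_diffs[OF entire_diffs[OF entire_qc]]

lemma Br_deriv: "u > 0 \<Longrightarrow> (Br has_real_derivative Br1 u) (at u)"
  unfolding Br_def[abs_def] Br1_def cL_def
  using PS_deriv[OF entire_pc, of u] PS_deriv[OF entire_qc, of u]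
  by (auto intro!: derivative_eq_intros simp: field_simps)

lemma Br1_deriv: "u > 0 \<Longrightarrow> (Br1 has_real_derivative Br2 u) (at u)"
  unfolding Br1_def[abs_def] Br2_def cL_def
  using PS_deriv[OF entire_pc, of u] PS_deriv[OF entire_qc, of u]
     PS_deriv[OF entire_diffs[OF entire_pc], of u] PS_deriv[OF entire_diffs[OF entire_qc], of u]
  by (auto intro!: derivative_eq_intros simp: field_simps power2_eq_square)

lemma Complex_fun: "(\<lambda>u. Complex (f u) (g u)) = (\<lambda>u. of_real (f u) + \<i> * of_real (g u))"
  by (simp add: Complex_eq)

lemma Hk_deriv: "u > 0 \<Longrightarrow> (Hk has_vector_derivative Hk1 u) (at u)"
  unfolding Hk_def[abs_def] Hk1_def Complex_fun Complex_eq
  using PS_deriv[OF entire_pc, of u] Br_deriv[of u]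
  by (auto intro!: derivative_eq_intros)

lemma Hk1_deriv: "u > 0 \<Longrightarrow> (Hk1 has_vector_derivative Hk2 u) (at u)"
  unfolding Hk1_def[abs_def] Hk2_def Complex_fun Complex_eq
  using PS_deriv[OF entire_diffs[OF entire_pc], of u] Br1_deriv[of u]
  by (auto intro!: derivative_eq_intros)

lemma hankel_Hk: "u > 0 \<Longrightarrow> hankel1_0 (sqrt u) = Hk u"
  unfolding hankel1_0_def Hk_def J0_PS Y0_PS Br_def cL_def
  by (simp add: ln_div ln_sqrt algebra_simps)

lemma scale_deriv:
  fixes H H1 :: "real \<Rightarrow> complex"
  assumes "c > 0" "s > 0" "\<And>u. u > 0 \<Longrightarrow> (H has_vector_derivative H1 u) (at u)"
  shows "((\<lambda>s. H (c * s)) has_vector_derivative (of_real c * H1 (c * s))) (at s)"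
proof -
  have f: "((\<lambda>s. c * s) has_vector_derivative c) (at s)"
    using has_real_derivative_iff_has_vector_derivative
    by (metis DERIV_cmult_Id)
  have "((H \<circ> (\<lambda>s. c * s)) has_vector_derivative (c *\<^sub>R H1 (c * s))) (at s)"
    by (rule vector_diff_chain_at[OF f assms(3)]) (use assms in simp)
  then show ?thesis by (simp add: o_def scaleR_conv_of_real)
qed

definition GG :: "real \<Rightarrow> real \<Rightarrow> real \<Rightarrow> complex" where
  "GG kp ks s = Hk (kp^2 * s) - Hk (ks^2 * s)"
definition GG1 :: "real \<Rightarrow> real \<Rightarrow> real \<Rightarrow> complex" where
  "GG1 kp ks s = of_real (kp^2) * Hk1 (kp^2 * s) - of_real (ks^2) * Hk1 (ks^2 * s)"
definition GG2 :: "real \<Rightarrow> real \<Rightarrow> real \<Rightarrow> complex" where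
  "GG2 kp ks s = of_real (kp^2 * kp^2) * Hk2 (kp^2 * s) - of_real (ks^2 * ks^2) * Hk2 (ks^2 * s)"

lemma hankel_radial:
  assumes "kp > 0" "ks > 0" "s > 0"
  shows "hankel1_0 (kp * sqrt s) - hankel1_0 (ks * sqrt s) = GG kp ks s"
proof -
  have "kp * sqrt s = sqrt (kp^2 * s)" "ks * sqrt s = sqrt (ks^2 * s)"
    using assms by (simp_all add: real_sqrt_mult)
  then show ?thesis unfolding GG_def using assms by (simp add: hankel_Hk)
qed

lemma GG_deriv:
  assumes "kp > 0" "ks > 0" "s > 0"
  shows "((\<lambda>s. hankel1_0 (kp * sqrt s) - hankel1_0 (ks * sqrt s)) has_vector_derivative GG1 kp ks s) (at s)"
proof -
  have "((\<lambda>s. Hk (kp^2 * s) - Hk (ks^2 * s)) has_vector_derivative GG1 kp ks s) (at s)"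
    unfolding GG1_def
    by (intro has_vector_derivative_diff scale_deriv Hk_deriv) (use assms in auto)
  then show ?thesis
    by (rule has_vector_derivative_transform_within_open[where S="{0<..}"])
       (use assms hankel_radial in \<open>auto simp: GG_def\<close>)
qed

lemma GG1_deriv:
  assumes "kp > 0" "ks > 0" "s > 0"
  shows "(GG1 kp ks has_vector_derivative GG2 kp ks s) (at s)"
proof -
  have *: "((\<lambda>s. of_real k * Hk1 (k * s)) has_vector_derivative (of_real k * (of_real k * Hk2 (k * s)))) (at s)"
    if "k > 0" for k
    by (intro has_vector_derivative_mult_right scale_deriv Hk1_deriv) (use assms that in auto)
  show ?thesis
    unfolding GG1_def[abs_def] GG2_def
    using has_vector_derivative_diff[OF *[of "kp^2"] *[of "ks^2"]] assms by (simp add: algebra_simps)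
qed

lemma Gamma_entry:
  assumes "mu > 0" "lam + 2 * mu > 0" "rho > 0" "\<omega> > 0" "x \<noteq> 0"
  defines "ks \<equiv> \<omega> / sqrt (mu / rho)" and "kp \<equiv> \<omega> / sqrt ((lam + 2 * mu) / rho)"
  shows "Gamma_omega lam mu rho \<omega> x $ i $ j =
     - (\<i> / (4 * complex_of_real mu)) * Hk (ks^2 * (x \<bullet> x)) * (if i = j then 1 else 0)
     + \<i> / (4 * complex_of_real (\<omega>^2 * rho)) *
        (of_real (2 * (if i = j then 1 else 0)) * GG1 kp ks (x \<bullet> x) + of_real (4 * (x $ i * x $ j)) * GG2 kp ks (x \<bullet> x))"
proof -
  have kp: "kp > 0" and ks: "ks > 0" using assms by (simp_all add: kp_def ks_def)
  have fe: "(\<lambda>y. hankel1_0 (kp * norm y) - hankel1_0 (ks * norm y))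
      = (\<lambda>y. (\<lambda>s. hankel1_0 (kp * sqrt s) - hankel1_0 (ks * sqrt s)) (y \<bullet> y))"
    by (simp add: norm_eq_sqrt_inner)
  have H: "hessian (\<lambda>y. hankel1_0 (kp * norm y) - hankel1_0 (ks * norm y)) x $ i $ j =
     of_real (2 * (if i = j then 1 else 0)) * GG1 kp ks (x \<bullet> x) + of_real (4 * (x $ i * x $ j)) * GG2 kp ks (x \<bullet> x)"
    unfolding fe by (rule hessian_radial[OF assms(5)]) (use GG_deriv GG1_deriv kp ks in auto)
  have xx: "x \<bullet> x > 0" using assms(5) by simp
  have "hankel1_0 (ks * norm x) = Hk (ks^2 * (x \<bullet> x))"
  proof -
    have "ks * norm x = sqrt (ks^2 * (x \<bullet> x))" using ks by (simp add: real_sqrt_mult norm_eq_sqrt_inner)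
    then show ?thesis using ks xx by (simp add: hankel_Hk)
  qed
  then show ?thesis
    unfolding Gamma_omega_def Let_def ks_def[symmetric] kp_def[symmetric] H[symmetric]
    by simp
qed



lemma Gamma_entry_scaled:
  fixes i j :: 2 and x :: "real^2"
  assumes "mu > 0" "lam + 2 * mu > 0" "rho > 0" "\<delta> > 0" "\<epsilon> > 0" "\<omega> > 0" "x \<noteq> 0"
  defines "t \<equiv> \<omega>^2 * (\<delta> / \<epsilon>) * rho" and "a \<equiv> 1 / mu" and "b \<equiv> 1 / (lam + 2 * mu)"
    and "s0 \<equiv> x \<bullet> x" and "d \<equiv> (if i = j then 1 else 0 :: real)" and "X \<equiv> x $ i * x $ j"
  shows "Im (Gamma_omega (lam / \<delta>) (mu / \<delta>) (rho / \<epsilon>) \<omega> x $ i $ j) =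
      \<delta> * (- (a / 4) * d * P0 (t * a * s0) + (1 / 2) * d * (b * P1 (t * b * s0) - a * P1 (t * a * s0))
         + X * t * (b^2 * P2 (t * b * s0) - a^2 * P2 (t * a * s0)))"
    and "Re (Gamma_omega (lam / \<delta>) (mu / \<delta>) (rho / \<epsilon>) \<omega> x $ i $ j) =
      \<delta> * ((a / 4) * d * Br (t * a * s0) - (1 / 2) * d * (b * Br1 (t * b * s0) - a * Br1 (t * a * s0))
         - X * t * (b^2 * Br2 (t * b * s0) - a^2 * Br2 (t * a * s0)))"
proof -
  have m: "mu / \<delta> > 0" and l: "lam / \<delta> + 2 * (mu / \<delta>) > 0" and r: "rho / \<epsilon> > 0"
    using assms by (auto simp: field_simps add_pos_pos)
  have ks: "(\<omega> / sqrt (mu / \<delta> / (rho / \<epsilon>)))^2 = t * a"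
  proof -
    have "mu / \<delta> / (rho / \<epsilon>) > 0" using m r by (rule divide_pos_pos)
    then show ?thesis using assms
      by (simp add: power_divide real_sqrt_pow2 t_def a_def field_simps)
  qed
  have kp: "(\<omega> / sqrt ((lam / \<delta> + 2 * (mu / \<delta>)) / (rho / \<epsilon>)))^2 = t * b"
  proof -
    have "(lam / \<delta> + 2 * (mu / \<delta>)) / (rho / \<epsilon>) > 0" using l r by (rule divide_pos_pos)
    then have "(\<omega> / sqrt ((lam / \<delta> + 2 * (mu / \<delta>)) / (rho / \<epsilon>)))^2
        = \<omega>^2 / ((lam / \<delta> + 2 * (mu / \<delta>)) / (rho / \<epsilon>))"
      by (simp add: power_divide real_sqrt_pow2)
    then show ?thesis using assms
      by (simp add: t_def b_def field_simps)
  qed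
  have tpos: "t > 0" using assms by (simp add: t_def)
  have e: "Gamma_omega (lam / \<delta>) (mu / \<delta>) (rho / \<epsilon>) \<omega> x $ i $ j =
     - (\<i> / (4 * complex_of_real (mu / \<delta>))) * Hk ((t * a) * s0) * d
     + \<i> / (4 * complex_of_real (\<omega>^2 * (rho / \<epsilon>))) *
        (of_real (2 * d) * GG1 (\<omega> / sqrt ((lam / \<delta> + 2 * (mu / \<delta>)) / (rho / \<epsilon>))) (\<omega> / sqrt (mu / \<delta> / (rho / \<epsilon>))) s0
         + of_real (4 * X) * GG2 (\<omega> / sqrt ((lam / \<delta> + 2 * (mu / \<delta>)) / (rho / \<epsilon>))) (\<omega> / sqrt (mu / \<delta> / (rho / \<epsilon>))) s0)"
    using Gamma_entry[OF m l r assms(6,7), of i j] unfolding ks s0_def d_def X_def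
    by (simp add: if_distrib)
  have w: "\<omega>^2 * (rho / \<epsilon>) = t / \<delta>" using assms by (simp add: t_def field_simps)
  have mm: "mu / \<delta> = 1 / (a * \<delta>)" using assms by (simp add: a_def)
  show "Im (Gamma_omega (lam / \<delta>) (mu / \<delta>) (rho / \<epsilon>) \<omega> x $ i $ j) =
      \<delta> * (- (a / 4) * d * P0 (t * a * s0) + (1 / 2) * d * (b * P1 (t * b * s0) - a * P1 (t * a * s0))
         + X * t * (b^2 * P2 (t * b * s0) - a^2 * P2 (t * a * s0)))"
    unfolding e unfolding GG1_def GG2_def unfolding ks kp unfolding w mm Hk_def Hk1_def Hk2_def
    using assms(4) tpos by (simp add: field_simps power2_eq_square)
  show "Re (Gamma_omega (lam / \<delta>) (mu / \<delta>) (rho / \<epsilon>) \<omega> x $ i $ j) =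
      \<delta> * ((a / 4) * d * Br (t * a * s0) - (1 / 2) * d * (b * Br1 (t * b * s0) - a * Br1 (t * a * s0))
         - X * t * (b^2 * Br2 (t * b * s0) - a^2 * Br2 (t * a * s0)))"
    unfolding e unfolding GG1_def GG2_def unfolding ks kp unfolding w mm Hk_def Hk1_def Hk2_def
    using assms(4) tpos by (simp add: field_simps power2_eq_square)
qed



lemma bigo_cmult: "f \<in> O[F](g) \<Longrightarrow> (\<lambda>x. c * f x) \<in> O[F](g)"
  by (cases "c = 0") simp_all

lemma entire_shift:
  assumes "entire c" shows "entire (\<lambda>n. c (n + m))"
  unfolding entire_def
proof
  fix y :: real
  show "summable (\<lambda>n. c (n + m) * y ^ n)"
  proof (cases "y = 0")
    case True then show ?thesis by (simp add: summable_0_powser)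
  next
    case False
    have "summable (\<lambda>n. c (n + m) * y ^ (n + m))"
      using summable_ignore_initial_segment[of "\<lambda>n. c n * y^n" m] assms by (simp add: entire_def)
    then have "summable (\<lambda>n. (c (n + m) * y ^ (n + m)) * (1 / y^m))" by (rule summable_mult2)
    then show ?thesis using False by (simp add: power_add field_simps)
  qed
qed

lemma PS_split:
  assumes "entire c"
  shows "PS c y - (\<Sum>n<m. c n * y^n) = y^m * PS (\<lambda>n. c (n + m)) y"
proof -
  have s: "summable (\<lambda>n. c n * y^n)" using assms by (simp add: entire_def)
  have s2: "summable (\<lambda>n. c (n + m) * y^n)" using entire_shift[OF assms] by (simp add: entire_def)
  have "PS c y = (\<Sum>n. c (n + m) * y^(n + m)) + (\<Sum>n<m. c n * y^n)"
    unfolding PS_def by (rule suminf_split_initial_segment[OF s])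
  also have "(\<Sum>n. c (n + m) * y^(n + m)) = (\<Sum>n. y^m * (c (n + m) * y^n))"
    by (simp add: power_add mult_ac)
  also have "\<dots> = y^m * PS (\<lambda>n. c (n + m)) y"
    unfolding PS_def by (rule suminf_mult[OF s2])
  finally show ?thesis by simp
qed

lemma PS_trunc_bigo:
  assumes "entire c"
  shows "(\<lambda>\<omega>. PS c (k * \<omega>^2) - (\<Sum>n<m. c n * (k * \<omega>^2)^n)) \<in> O[at_right 0](\<lambda>\<omega>. \<omega>^(2*m))"
proof -
  let ?c = "\<lambda>n. c (n + m)"
  have cont: "isCont (PS ?c) 0"
    using isCont_powser_converges_everywhere[of ?c 0] entire_shift[OF assms, of m]
    unfolding PS_def[abs_def] entire_def by blast
  have "((\<lambda>\<omega>. k * \<omega>^2) \<longlongrightarrow> 0) (at_right (0::real))"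
    by (auto intro!: tendsto_eq_intros)
  then have "((\<lambda>\<omega>. PS ?c (k * \<omega>^2)) \<longlongrightarrow> PS ?c 0) (at_right (0::real))"
    by (rule isCont_tendsto_compose[OF cont])
  then have b1: "(\<lambda>\<omega>. PS ?c (k * \<omega>^2)) \<in> O[at_right 0](\<lambda>_. 1)"
    by (intro bigoI_tendsto[where c="PS ?c 0"]) simp_all
  have b2: "(\<lambda>\<omega>. (k * \<omega>^2)^m) \<in> O[at_right 0](\<lambda>\<omega>. \<omega>^(2*m))"
    by (simp add: power_mult_distrib power_mult bigo_cmult)
  have "(\<lambda>\<omega>. (k * \<omega>^2)^m * PS ?c (k * \<omega>^2)) \<in> O[at_right 0](\<lambda>\<omega>. \<omega>^(2*m) * 1)"
    by (rule landau_o.big.mult[OF b2 b1])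
  then show ?thesis using PS_split[OF assms] by simp
qed

lemma sum2: "(\<Sum>n<2. c n * y^n) = c 0 + c 1 * (y::real)"
  by (simp add: numeral_2_eq_2)
lemma sum3: "(\<Sum>n<3. c n * y^n) = c 0 + c 1 * y + c 2 * (y::real)^2"
  by (simp add: numeral_3_eq_3 numeral_2_eq_2 power2_eq_square)
lemma sum1: "(\<Sum>n<1. c n * y^n) = (c 0 :: real)"
  by simp

lemma pc_vals: "pc 0 = 1" "pc 1 = -1/4" "pc 2 = 1/64"
  by (simp_all add: pc_def)
lemma harm12: "harm 1 = (1::real)" "harm 2 = (3/2::real)"
  by (simp_all add: harm_def numeral_2_eq_2)
lemma qc_vals: "qc 0 = 0" "qc 1 = 1/4" "qc 2 = -3/128"
  by (simp_all add: qc_def harm_def numeral_2_eq_2)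
lemma diffs_vals: "diffs c 0 = c 1" "diffs c 1 = 2 * c 2" "diffs c 2 = 3 * c 3"
  by (simp_all add: diffs_def numeral_2_eq_2 numeral_3_eq_3)



definition Emat :: "real \<Rightarrow> real \<Rightarrow> real \<Rightarrow> real \<Rightarrow> real \<Rightarrow> real \<Rightarrow> real^2 \<Rightarrow> complex^2^2" where
  "Emat lam mu rho \<delta> \<tau> \<omega> x = (\<chi> i j.
             complex_of_real \<delta> * Gamma0 lam mu x $ i $ j
           + complex_of_real \<delta> * (complex_of_real (alpha1 lam mu * ln (sqrt rho * \<tau> * \<omega>)) + alpha_const lam mu)
               * (if i = j then 1 else 0)
           + complex_of_real (\<delta> * \<omega>^2 * ln \<omega> * rho * \<tau>^2) * Gamma1 lam mu x $ i $ j
           + complex_of_real (\<delta> * \<omega>^2 * rho * \<tau>^2 * ln (sqrt rho * \<tau>)) * Gamma1 lam mu x $ i $ j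
           + complex_of_real (\<delta> * \<omega>^2 * rho * \<tau>^2) * Gamma2 lam mu x $ i $ j)"

definition "R2P0 u = P0 u - (1 - u/4)"
definition "R3P0 u = P0 u - (1 - u/4 + u^2/64)"
definition "R2P1 u = P1 u - (-1/4 + u/32)"
definition "R1P2 u = P2 u - 1/32"
definition "R2Q0 u = Q0 u - u/4"
definition "R2Q1 u = Q1 u - (1/4 - 3*u/64)"
definition "R1Q2 u = Q2 u - (-3/64)"

definition "aP0 k \<omega> = R2P0 (k * \<omega>^2)"
definition "aQ0 k \<omega> = R2Q0 (k * \<omega>^2)"
definition "aP1 k \<omega> = R2P1 (k * \<omega>^2)"
definition "aQ1 k \<omega> = R2Q1 (k * \<omega>^2)"
definition "aP0d T k \<omega> = R3P0 (k * \<omega>^2) / (T * \<omega>^2)"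
definition "aP2 T k \<omega> = (T * \<omega>^2) * R1P2 (k * \<omega>^2)"
definition "aQ2 T k \<omega> = (T * \<omega>^2) * R1Q2 (k * \<omega>^2)"
definition "lg k \<omega> = cL (k * \<omega>^2)"

lemma E_c_eq: "E_c = Complex (2 * euler_mascheroni - 2 * ln 2) (- pi)"
proof -
  have l: "Ln (2::complex) = of_real (ln 2)" using Ln_of_real[of 2] by simp
  have e: "(euler_mascheroni::complex) = of_real euler_mascheroni" by simp
  show ?thesis unfolding E_c_def l e
    by (simp add: complex_eq_iff del: of_real_euler_mascheroni)
qed

lemma Re_alpha: "Re (alpha_const lam mu) = alpha1 lam mu / 2 * (2 * euler_mascheroni - 2 * ln 2) + alpha2 lam mu / 2
     - 1 / (8 * pi) * (1 / mu * ln mu + 1 / (2 * mu + lam) * ln (2 * mu + lam))"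
  and Im_alpha: "Im (alpha_const lam mu) = - alpha1 lam mu / 2 * pi"
  by (simp_all add: alpha_const_def E_c_eq)

lemma Re_beta1: "Re (beta1 lam mu) = ((euler_mascheroni - ln 2) - 1) * beta2 lam mu - beta3 lam mu / 8
     + 1 / (2^6 * pi) * (3 / mu^2 * ln mu + ln (2 * mu + lam) / (2 * mu + lam)^2)"
  and Im_beta1: "Im (beta1 lam mu) = - pi / 2 * beta2 lam mu"
  by (simp_all add: beta1_def E_c_eq)

lemma Re_beta4: "Re (beta4 lam mu) = 1 / 4 * (2 * (2 * euler_mascheroni - 2 * ln 2) - 3) * beta3 lam mu
     - 1 / (2^5 * pi) * (ln mu / mu^2 - ln (2 * mu + lam) / (2 * mu + lam)^2)"
  and Im_beta4: "Im (beta4 lam mu) = - pi / 2 * beta3 lam mu"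
  by (simp_all add: beta4_def E_c_eq)

lemma Emat_ReIm:
  fixes i j :: 2 and x :: "real^2"
  assumes "\<omega> > 0" "x \<noteq> 0"
  defines "d \<equiv> (if i = j then 1 else 0 :: real)" and "X \<equiv> x $ i * x $ j" and "r \<equiv> norm x"
  shows "Im (Emat lam mu rho \<delta> \<tau> \<omega> x $ i $ j) =
     \<delta> * (- alpha1 lam mu / 2 * pi * d) + \<delta> * \<omega>^2 * rho * \<tau>^2 * (- pi / 2 * beta2 lam mu * r^2 * d - pi / 2 * beta3 lam mu * X)"
    and "Re (Emat lam mu rho \<delta> \<tau> \<omega> x $ i $ j) =
     \<delta> * (alpha1 lam mu * ln r * d - alpha2 lam mu * X / r^2)
     + \<delta> * (alpha1 lam mu * ln (sqrt rho * \<tau> * \<omega>) + Re (alpha_const lam mu)) * d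
     + \<delta> * \<omega>^2 * ln \<omega> * rho * \<tau>^2 * (beta2 lam mu * r^2 * d + beta3 lam mu * X)
     + \<delta> * \<omega>^2 * rho * \<tau>^2 * ln (sqrt rho * \<tau>) * (beta2 lam mu * r^2 * d + beta3 lam mu * X)
     + \<delta> * \<omega>^2 * rho * \<tau>^2 * (Re (beta1 lam mu) * r^2 * d + beta2 lam mu * ln r * r^2 * d
          + beta3 lam mu * ln r * X + Re (beta4 lam mu) * X)"
proof -
  have L: "Ln (complex_of_real \<omega>) = of_real (ln \<omega>)" using assms(1) by (simp add: Ln_of_real)
  show "Im (Emat lam mu rho \<delta> \<tau> \<omega> x $ i $ j) =
     \<delta> * (- alpha1 lam mu / 2 * pi * d) + \<delta> * \<omega>^2 * rho * \<tau>^2 * (- pi / 2 * beta2 lam mu * r^2 * d - pi / 2 * beta3 lam mu * X)"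
    unfolding Emat_def d_def X_def r_def
    by (simp add: L Gamma0_def Gamma1_def Gamma2_def Im_alpha Im_beta1 Im_beta4 algebra_simps)
  show "Re (Emat lam mu rho \<delta> \<tau> \<omega> x $ i $ j) =
     \<delta> * (alpha1 lam mu * ln r * d - alpha2 lam mu * X / r^2)
     + \<delta> * (alpha1 lam mu * ln (sqrt rho * \<tau> * \<omega>) + Re (alpha_const lam mu)) * d
     + \<delta> * \<omega>^2 * ln \<omega> * rho * \<tau>^2 * (beta2 lam mu * r^2 * d + beta3 lam mu * X)
     + \<delta> * \<omega>^2 * rho * \<tau>^2 * ln (sqrt rho * \<tau>) * (beta2 lam mu * r^2 * d + beta3 lam mu * X)
     + \<delta> * \<omega>^2 * rho * \<tau>^2 * (Re (beta1 lam mu) * r^2 * d + beta2 lam mu * ln r * r^2 * d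
          + beta3 lam mu * ln r * X + Re (beta4 lam mu) * X)"
    unfolding Emat_def d_def X_def r_def
    by (simp add: L Gamma0_def Gamma1_def Gamma2_def Im_alpha Im_beta1 Im_beta4 algebra_simps)
qed

lemma Im_ident:
  fixes i j :: 2 and x :: "real^2"
  assumes "mu > 0" "lam + 2 * mu > 0" "rho > 0" "\<delta> > 0" "\<epsilon> > 0" "\<omega> > 0" "x \<noteq> 0"
  defines "T \<equiv> (\<delta> / \<epsilon>) * rho" and "a \<equiv> 1 / mu" and "b \<equiv> 1 / (lam + 2 * mu)"
    and "s0 \<equiv> x \<bullet> x" and "d \<equiv> (if i = j then 1 else 0 :: real)" and "X \<equiv> x $ i * x $ j"
  shows "Im (Gamma_omega (lam / \<delta>) (mu / \<delta>) (rho / \<epsilon>) \<omega> x $ i $ j) - Im (Emat lam mu rho \<delta> (sqrt (\<delta> / \<epsilon>)) \<omega> x $ i $ j)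
     = \<delta> * (- (a / 4) * d * aP0 (T * a * s0) \<omega> + (1 / 2) * d * (b * aP1 (T * b * s0) \<omega> - a * aP1 (T * a * s0) \<omega>)
         + X * (b^2 * aP2 T (T * b * s0) \<omega> - a^2 * aP2 T (T * a * s0) \<omega>))"
proof -
  have t: "\<omega>^2 * (\<delta> / \<epsilon>) * rho = T * \<omega>^2" by (simp add: T_def)
  have tau: "sqrt (\<delta> / \<epsilon>) ^ 2 = \<delta> / \<epsilon>" using assms by simp
  have s0: "(norm x)^2 = s0" by (simp add: s0_def power2_norm_eq_inner)
  have G: "Im (Gamma_omega (lam / \<delta>) (mu / \<delta>) (rho / \<epsilon>) \<omega> x $ i $ j) =
      \<delta> * (- (a / 4) * d * P0 (T * \<omega>^2 * a * s0) + (1 / 2) * d * (b * P1 (T * \<omega>^2 * b * s0) - a * P1 (T * \<omega>^2 * a * s0))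
         + X * (T * \<omega>^2) * (b^2 * P2 (T * \<omega>^2 * b * s0) - a^2 * P2 (T * \<omega>^2 * a * s0)))"
    using Gamma_entry_scaled(1)[OF assms(1-7), of i j] unfolding t a_def[symmetric] b_def[symmetric] s0_def[symmetric] d_def[symmetric] X_def[symmetric] .
  have E: "Im (Emat lam mu rho \<delta> (sqrt (\<delta> / \<epsilon>)) \<omega> x $ i $ j) =
     \<delta> * (- alpha1 lam mu / 2 * pi * d) + \<delta> * \<omega>^2 * T * (- pi / 2 * beta2 lam mu * s0 * d - pi / 2 * beta3 lam mu * X)"
    using Emat_ReIm(1)[OF assms(6,7), of lam mu rho \<delta> "sqrt (\<delta> / \<epsilon>)" i j]
    unfolding tau s0 d_def[symmetric] X_def[symmetric] by (simp add: T_def mult_ac)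
  have ab: "alpha1 lam mu = (a + b) / (4 * pi)" "beta2 lam mu = - (3 * a^2 + b^2) / (32 * pi)"
     "beta3 lam mu = (a^2 - b^2) / (16 * pi)"
    by (simp_all add: alpha1_def beta2_def beta3_def a_def b_def field_simps)
  show ?thesis
    unfolding G E ab aP0_def aP1_def aP2_def R2P0_def R2P1_def R1P2_def
    by (simp add: field_simps power2_eq_square)
qed

lemma d_part:
  fixes a b s0 T w p g l2 lq lr lw lm lnn lx PM PN P1M P1N QM QN Q1M Q1N lM lN :: real
  assumes nz: "a \<noteq> 0" "b \<noteq> 0" "s0 \<noteq> 0" "T \<noteq> 0" "w \<noteq> 0" "p \<noteq> 0"
    and lM: "lM = (lq + lr + 2 * lw - lm + 2 * lx) / 2 - l2 + g"
    and lN: "lN = (lq + lr + 2 * lw - lnn + 2 * lx) / 2 - l2 + g"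
    and al: "al1 = (a + b) / (4 * p)" "al2 = (a - b) / (4 * p)"
    and be: "be2 = - (3 * a^2 + b^2) / (32 * p)" "be3 = (a^2 - b^2) / (16 * p)"
    and ReAl: "ReAl = al1 / 2 * (2 * g - 2 * l2) + al2 / 2 - 1 / (8 * p) * (a * lm + b * lnn)"
    and Reb1: "Reb1 = ((g - l2) - 1) * be2 - be3 / 8 + 1 / (2^6 * p) * (3 * a^2 * lm + b^2 * lnn)"
    and BrM: "BrM = 2 / p * (lM * PM + QM)"
    and Br1M: "Br1M = 2 / p * (PM / (2 * (T * a * s0 * w)) + lM * P1M + Q1M)"
    and Br1N: "Br1N = 2 / p * (PN / (2 * (T * b * s0 * w)) + lN * P1N + Q1N)"
    and A1: "A_P0M = PM - (1 - T * a * s0 * w / 4)"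
    and A2: "A_Q0M = QM - T * a * s0 * w / 4"
    and A3: "A_P0dM = (PM - (1 - T * a * s0 * w / 4 + (T * a * s0 * w)^2 / 64)) / (T * w)"
    and A4: "A_P0dN = (PN - (1 - T * b * s0 * w / 4 + (T * b * s0 * w)^2 / 64)) / (T * w)"
    and A5: "A_P1M = P1M - (- 1 / 4 + T * a * s0 * w / 32)"
    and A6: "A_P1N = P1N - (- 1 / 4 + T * b * s0 * w / 32)"
    and A7: "A_Q1M = Q1M - (1 / 4 - 3 * (T * a * s0 * w) / 64)"
    and A8: "A_Q1N = Q1N - (1 / 4 - 3 * (T * b * s0 * w) / 64)"
  shows
  "((a / 4) * BrM - (1 / 2) * (b * Br1N - a * Br1M))
   - (al1 * lx + (al1 * (lr / 2 + lq / 2 + lw) + ReAl)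
      + w * lw * T * (be2 * s0) + w * T * (lr / 2 + lq / 2) * (be2 * s0)
      + w * T * (Reb1 * s0 + be2 * lx * s0))
   = (a / 4) * (2 / p) * (lM * A_P0M + A_Q0M)
     - (1 / 2) * (2 / p) * ((A_P0dN - A_P0dM) / (2 * s0)
        + b * (lN * A_P1N) - a * (lM * A_P1M) + b * A_Q1N - a * A_Q1M)"
  unfolding BrM Br1M Br1N A1 A2 A3 A4 A5 A6 A7 A8 ReAl Reb1 lM lN al be
  using nz by (simp add: field_simps power2_eq_square)

lemma X_part:
  fixes a b s0 T w p g l2 lq lr lw lm lnn lx PM PN P1M P1N P2M P2N Q2M Q2N lM lN :: real
  assumes nz: "a \<noteq> 0" "b \<noteq> 0" "s0 \<noteq> 0" "T \<noteq> 0" "w \<noteq> 0" "p \<noteq> 0"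
    and lM: "lM = (lq + lr + 2 * lw - lm + 2 * lx) / 2 - l2 + g"
    and lN: "lN = (lq + lr + 2 * lw - lnn + 2 * lx) / 2 - l2 + g"
    and al: "al1 = (a + b) / (4 * p)" "al2 = (a - b) / (4 * p)"
    and be: "be2 = - (3 * a^2 + b^2) / (32 * p)" "be3 = (a^2 - b^2) / (16 * p)"
    and Reb4: "Reb4 = 1 / 4 * (2 * (2 * g - 2 * l2) - 3) * be3 - 1 / (2^5 * p) * (a^2 * lm - b^2 * lnn)"
    and Br2M: "Br2M = 2 / p * (- PM / (2 * (T * a * s0 * w)^2) + P1M / (T * a * s0 * w) + lM * P2M + Q2M)"
    and Br2N: "Br2N = 2 / p * (- PN / (2 * (T * b * s0 * w)^2) + P1N / (T * b * s0 * w) + lN * P2N + Q2N)"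
    and A3: "A_P0dM = (PM - (1 - T * a * s0 * w / 4 + (T * a * s0 * w)^2 / 64)) / (T * w)"
    and A4: "A_P0dN = (PN - (1 - T * b * s0 * w / 4 + (T * b * s0 * w)^2 / 64)) / (T * w)"
    and A5: "A_P1M = P1M - (- 1 / 4 + T * a * s0 * w / 32)"
    and A6: "A_P1N = P1N - (- 1 / 4 + T * b * s0 * w / 32)"
    and A9: "A_P2M = (T * w) * (P2M - 1 / 32)"
    and A10: "A_P2N = (T * w) * (P2N - 1 / 32)"
    and A11: "A_Q2M = (T * w) * (Q2M - (- 3 / 64))"
    and A12: "A_Q2N = (T * w) * (Q2N - (- 3 / 64))"
  shows
  "(- (T * w) * (b^2 * Br2N - a^2 * Br2M))
   - (- al2 / s0 + w * lw * T * be3 + w * T * (lr / 2 + lq / 2) * be3 + w * T * (be3 * lx + Reb4))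
   = - (2 / p) * (- (A_P0dN - A_P0dM) / (2 * s0^2)
        + (b * A_P1N - a * A_P1M) / s0
        + b^2 * (lN * A_P2N) - a^2 * (lM * A_P2M)
        + b^2 * A_Q2N - a^2 * A_Q2M)"
  unfolding Br2M Br2N A3 A4 A5 A6 A9 A10 A11 A12 Reb4 lM lN al be
  using nz by (simp add: field_simps power2_eq_square)

lemma lin_G: "(\<delta>::real) * ((a / 4) * d * A - (1 / 2) * d * B - X * t * C) = \<delta> * (d * ((a / 4) * A - (1 / 2) * B) + X * (- t * C))"
  by (simp add: algebra_simps)
lemma lin_F: "(\<delta>::real) * (d * A + X * B) - \<delta> * (d * C + X * D) = \<delta> * (d * (A - C) + X * (B - D))"
  by (simp add: algebra_simps)

lemma Re_ident:
  fixes i j :: 2 and x :: "real^2"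
  assumes "mu > 0" "lam + 2 * mu > 0" "rho > 0" "\<delta> > 0" "\<epsilon> > 0" "\<omega> > 0" "x \<noteq> 0"
  defines "T \<equiv> (\<delta> / \<epsilon>) * rho" and "a \<equiv> 1 / mu" and "b \<equiv> 1 / (lam + 2 * mu)"
    and "s0 \<equiv> x \<bullet> x" and "d \<equiv> (if i = j then 1 else 0 :: real)" and "X \<equiv> x $ i * x $ j"
  shows "Re (Gamma_omega (lam / \<delta>) (mu / \<delta>) (rho / \<epsilon>) \<omega> x $ i $ j) - Re (Emat lam mu rho \<delta> (sqrt (\<delta> / \<epsilon>)) \<omega> x $ i $ j)
     = \<delta> * (d * ((a / 4) * (2 / pi) * (lg (T * a * s0) \<omega> * aP0 (T * a * s0) \<omega> + aQ0 (T * a * s0) \<omega>)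
     - (1 / 2) * (2 / pi) * ((aP0d T (T * b * s0) \<omega> - aP0d T (T * a * s0) \<omega>) / (2 * s0)
        + b * (lg (T * b * s0) \<omega> * aP1 (T * b * s0) \<omega>) - a * (lg (T * a * s0) \<omega> * aP1 (T * a * s0) \<omega>)
        + b * aQ1 (T * b * s0) \<omega> - a * aQ1 (T * a * s0) \<omega>))
     + X * (- (2 / pi) * (- (aP0d T (T * b * s0) \<omega> - aP0d T (T * a * s0) \<omega>) / (2 * s0^2)
        + (b * aP1 (T * b * s0) \<omega> - a * aP1 (T * a * s0) \<omega>) / s0
        + b^2 * (lg (T * b * s0) \<omega> * aP2 T (T * b * s0) \<omega>) - a^2 * (lg (T * a * s0) \<omega> * aP2 T (T * a * s0) \<omega>)
        + b^2 * aQ2 T (T * b * s0) \<omega> - a^2 * aQ2 T (T * a * s0) \<omega>)))"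
proof -
  have tau: "sqrt (\<delta> / \<epsilon>) ^ 2 = \<delta> / \<epsilon>" using assms by simp
  have xx: "x \<bullet> x > 0" using assms by simp
  have s0: "(norm x)^2 = s0" by (simp add: s0_def power2_norm_eq_inner)
  have s0p: "s0 > 0" using xx by (simp add: s0_def)
  have Tp: "T > 0" using assms by (simp add: T_def)
  have ap: "a > 0" and bp: "b > 0" using assms by (simp_all add: a_def b_def)
  have lns0: "ln s0 = 2 * ln (norm x)"
  proof -
    have "ln s0 = ln ((norm x)^2)" using s0 by simp
    also have "\<dots> = 2 * ln (norm x)" using assms(7) by (simp add: ln_realpow)
    finally show ?thesis .
  qed
  have targ: "\<omega>^2 * (\<delta> / \<epsilon>) * rho * a * s0 = T * a * s0 * \<omega>^2" "\<omega>^2 * (\<delta> / \<epsilon>) * rho * b * s0 = T * b * s0 * \<omega>^2"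
     "\<omega>^2 * (\<delta> / \<epsilon>) * rho = T * \<omega>^2"
    by (simp_all add: T_def mult_ac)
  have G: "Re (Gamma_omega (lam / \<delta>) (mu / \<delta>) (rho / \<epsilon>) \<omega> x $ i $ j) =
      \<delta> * (d * ((a / 4) * Br (T * a * s0 * \<omega>^2) - (1 / 2) * (b * Br1 (T * b * s0 * \<omega>^2) - a * Br1 (T * a * s0 * \<omega>^2)))
         + X * (- (T * \<omega>^2) * (b^2 * Br2 (T * b * s0 * \<omega>^2) - a^2 * Br2 (T * a * s0 * \<omega>^2))))"
    using Gamma_entry_scaled(2)[OF assms(1-7), of i j]
    unfolding a_def[symmetric] b_def[symmetric] s0_def[symmetric] d_def[symmetric] X_def[symmetric] targ(1,2)
    unfolding targ(3) lin_G .
  have E0: "Re (Emat lam mu rho \<delta> (sqrt (\<delta> / \<epsilon>)) \<omega> x $ i $ j) =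
     \<delta> * (alpha1 lam mu * ln (norm x) * d - alpha2 lam mu * X / s0)
     + \<delta> * (alpha1 lam mu * (ln rho / 2 + ln (\<delta> / \<epsilon>) / 2 + ln \<omega>) + Re (alpha_const lam mu)) * d
     + \<delta> * \<omega>^2 * ln \<omega> * T * (beta2 lam mu * s0 * d + beta3 lam mu * X)
     + \<delta> * \<omega>^2 * T * (ln rho / 2 + ln (\<delta> / \<epsilon>) / 2) * (beta2 lam mu * s0 * d + beta3 lam mu * X)
     + \<delta> * \<omega>^2 * T * (Re (beta1 lam mu) * s0 * d + beta2 lam mu * ln (norm x) * s0 * d
          + beta3 lam mu * ln (norm x) * X + Re (beta4 lam mu) * X)"
  proof -
    have l1: "ln (sqrt rho * sqrt (\<delta> / \<epsilon>) * \<omega>) = ln rho / 2 + ln (\<delta> / \<epsilon>) / 2 + ln \<omega>"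
      using assms by (simp add: ln_mult ln_sqrt)
    have l2: "ln (sqrt rho * sqrt (\<delta> / \<epsilon>)) = ln rho / 2 + ln (\<delta> / \<epsilon>) / 2"
      using assms by (simp add: ln_mult ln_sqrt)
    show ?thesis
      using Emat_ReIm(2)[OF assms(6,7), of lam mu rho \<delta> "sqrt (\<delta> / \<epsilon>)" i j]
      unfolding tau s0 d_def[symmetric] X_def[symmetric] l1 l2 by (simp add: T_def mult_ac)
  qed
  let ?lq = "ln (\<delta> / \<epsilon>)" and ?lr = "ln rho" and ?lw = "ln \<omega>" and ?lm = "ln mu"
    and ?lnn = "ln (2 * mu + lam)" and ?lx = "ln (norm x)" and ?w = "\<omega>^2"
  have E: "Re (Emat lam mu rho \<delta> (sqrt (\<delta> / \<epsilon>)) \<omega> x $ i $ j) =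
     \<delta> * (d * (alpha1 lam mu * ?lx + (alpha1 lam mu * (?lr / 2 + ?lq / 2 + ?lw) + Re (alpha_const lam mu))
      + ?w * ?lw * T * (beta2 lam mu * s0) + ?w * T * (?lr / 2 + ?lq / 2) * (beta2 lam mu * s0)
      + ?w * T * (Re (beta1 lam mu) * s0 + beta2 lam mu * ?lx * s0))
     + X * (- alpha2 lam mu / s0 + ?w * ?lw * T * beta3 lam mu + ?w * T * (?lr / 2 + ?lq / 2) * beta3 lam mu
      + ?w * T * (beta3 lam mu * ?lx + Re (beta4 lam mu))))"
    unfolding E0 using s0p by (simp add: field_simps)
  have lnab: "ln a = - ln mu" "ln b = - ln (2 * mu + lam)"
    using assms by (simp_all add: a_def b_def ln_div add.commute)
  have lgM: "lg (T * a * s0) \<omega> = (?lq + ?lr + 2 * ?lw - ?lm + 2 * ?lx) / 2 - ln 2 + euler_mascheroni"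
    and lgN: "lg (T * b * s0) \<omega> = (?lq + ?lr + 2 * ?lw - ?lnn + 2 * ?lx) / 2 - ln 2 + euler_mascheroni"
    using assms s0p ap bp unfolding lg_def cL_def lnab[symmetric] lns0[symmetric]
    by (simp_all add: T_def ln_mult ln_div ln_realpow)
  have ab: "alpha1 lam mu = (a + b) / (4 * pi)" "alpha2 lam mu = (a - b) / (4 * pi)"
     "beta2 lam mu = - (3 * a^2 + b^2) / (32 * pi)"
     "beta3 lam mu = (a^2 - b^2) / (16 * pi)"
    by (simp_all add: alpha1_def alpha2_def beta2_def beta3_def a_def b_def field_simps)
  have ab2: "1 / mu = a" "1 / (2 * mu + lam) = b" "3 / mu^2 = 3 * a^2" "1 / (2 * mu + lam)^2 = b^2"
    "ln (2 * mu + lam) / (2 * mu + lam)^2 = b^2 * ln (2 * mu + lam)" "ln mu / mu^2 = a^2 * ln mu"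
    by (simp_all add: a_def b_def field_simps)
  have ra: "Re (alpha_const lam mu) = alpha1 lam mu / 2 * (2 * euler_mascheroni - 2 * ln 2) + alpha2 lam mu / 2
     - 1 / (8 * pi) * (a * ln mu + b * ln (2 * mu + lam))" unfolding Re_alpha ab2 ..
  have rb1: "Re (beta1 lam mu) = ((euler_mascheroni - ln 2) - 1) * beta2 lam mu - beta3 lam mu / 8
     + 1 / (2^6 * pi) * (3 * a^2 * ln mu + b^2 * ln (2 * mu + lam))" unfolding Re_beta1 ab2 by simp
  have rb4: "Re (beta4 lam mu) = 1 / 4 * (2 * (2 * euler_mascheroni - 2 * ln 2) - 3) * beta3 lam mu
     - 1 / (2^5 * pi) * (a^2 * ln mu - b^2 * ln (2 * mu + lam))" unfolding Re_beta4 ab2 ..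
  have nz: "a \<noteq> 0" "b \<noteq> 0" "s0 \<noteq> 0" "T \<noteq> 0" "?w \<noteq> 0" "pi \<noteq> 0" using ap bp s0p Tp assms(6) by auto
  have D: "((a / 4) * Br (T * a * s0 * \<omega>^2) - (1 / 2) * (b * Br1 (T * b * s0 * \<omega>^2) - a * Br1 (T * a * s0 * \<omega>^2)))
     - (alpha1 lam mu * ?lx + (alpha1 lam mu * (?lr / 2 + ?lq / 2 + ?lw) + Re (alpha_const lam mu))
      + ?w * ?lw * T * (beta2 lam mu * s0) + ?w * T * (?lr / 2 + ?lq / 2) * (beta2 lam mu * s0)
      + ?w * T * (Re (beta1 lam mu) * s0 + beta2 lam mu * ?lx * s0))
     = (a / 4) * (2 / pi) * (lg (T * a * s0) \<omega> * aP0 (T * a * s0) \<omega> + aQ0 (T * a * s0) \<omega>)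
     - (1 / 2) * (2 / pi) * ((aP0d T (T * b * s0) \<omega> - aP0d T (T * a * s0) \<omega>) / (2 * s0)
        + b * (lg (T * b * s0) \<omega> * aP1 (T * b * s0) \<omega>) - a * (lg (T * a * s0) \<omega> * aP1 (T * a * s0) \<omega>)
        + b * aQ1 (T * b * s0) \<omega> - a * aQ1 (T * a * s0) \<omega>)"
    by (rule d_part[where PM = "P0 (T * a * s0 * \<omega>^2)" and PN = "P0 (T * b * s0 * \<omega>^2)" and P1M = "P1 (T * a * s0 * \<omega>^2)" and P1N = "P1 (T * b * s0 * \<omega>^2)" and QM = "Q0 (T * a * s0 * \<omega>^2)" and Q1M = "Q1 (T * a * s0 * \<omega>^2)" and Q1N = "Q1 (T * b * s0 * \<omega>^2)", OF nz lgM lgN ab(1,2) ab(3,4) ra rb1])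
       (simp_all add: Br_def Br1_def lg_def aP0_def aQ0_def aP0d_def aP1_def aQ1_def
          R2P0_def R2Q0_def R3P0_def R2P1_def R2Q1_def)
  have XX: "(- (T * \<omega>^2) * (b^2 * Br2 (T * b * s0 * \<omega>^2) - a^2 * Br2 (T * a * s0 * \<omega>^2)))
     - (- alpha2 lam mu / s0 + ?w * ?lw * T * beta3 lam mu + ?w * T * (?lr / 2 + ?lq / 2) * beta3 lam mu
      + ?w * T * (beta3 lam mu * ?lx + Re (beta4 lam mu)))
     = - (2 / pi) * (- (aP0d T (T * b * s0) \<omega> - aP0d T (T * a * s0) \<omega>) / (2 * s0^2)
        + (b * aP1 (T * b * s0) \<omega> - a * aP1 (T * a * s0) \<omega>) / s0
        + b^2 * (lg (T * b * s0) \<omega> * aP2 T (T * b * s0) \<omega>) - a^2 * (lg (T * a * s0) \<omega> * aP2 T (T * a * s0) \<omega>)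
        + b^2 * aQ2 T (T * b * s0) \<omega> - a^2 * aQ2 T (T * a * s0) \<omega>)"
    by (rule X_part[where PM = "P0 (T * a * s0 * \<omega>^2)" and PN = "P0 (T * b * s0 * \<omega>^2)" and P1M = "P1 (T * a * s0 * \<omega>^2)" and P1N = "P1 (T * b * s0 * \<omega>^2)" and P2M = "P2 (T * a * s0 * \<omega>^2)" and P2N = "P2 (T * b * s0 * \<omega>^2)" and Q2M = "Q2 (T * a * s0 * \<omega>^2)" and Q2N = "Q2 (T * b * s0 * \<omega>^2)", OF nz lgM lgN ab(1,2) ab(3,4) rb4])
       (simp_all add: Br2_def lg_def aP0d_def aP1_def aP2_def aQ2_def
          R3P0_def R2P1_def R1P2_def R1Q2_def)
  show ?thesis unfolding G E lin_F D XX ..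
qed



lemma bigo_cdiv: "f \<in> O[F](g) \<Longrightarrow> (\<lambda>x. f x / c) \<in> O[F](g)"
  using bigo_cmult[of f F g "1 / c"] by simp

lemma bigo_uminus': "f \<in> O[F](g) \<Longrightarrow> (\<lambda>x. - f x) \<in> O[F](g)"
  by simp

lemma vals_Suc0: "pc (Suc 0) = -1/4" "qc (Suc 0) = 1/4" "diffs c (Suc 0) = 2 * c 2"
  using pc_vals(2) qc_vals(2) diffs_vals(2) by simp_all

lemma trunc_at:
  assumes "entire c" "\<And>\<omega>. f \<omega> = PS c (k * \<omega>^2) - (\<Sum>n<m. c n * (k * \<omega>^2)^n)"
  shows "f \<in> O[at_right 0](\<lambda>\<omega>. \<omega>^(2*m))"
proof -
  have "f = (\<lambda>\<omega>. PS c (k * \<omega>^2) - (\<Sum>n<m. c n * (k * \<omega>^2)^n))" using assms(2) by auto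
  then show ?thesis using PS_trunc_bigo[OF assms(1)] by simp
qed

lemma aP0_bigo: "aP0 k \<in> O[at_right 0](\<lambda>\<omega>. \<omega>^4)"
  using trunc_at[OF entire_pc, of "aP0 k" k 2]
  by (simp add: aP0_def R2P0_def sum2 pc_vals vals_Suc0)
lemma aQ0_bigo: "aQ0 k \<in> O[at_right 0](\<lambda>\<omega>. \<omega>^4)"
  using trunc_at[OF entire_qc, of "aQ0 k" k 2]
  by (simp add: aQ0_def R2Q0_def sum2 qc_vals vals_Suc0)
lemma aP1_bigo: "aP1 k \<in> O[at_right 0](\<lambda>\<omega>. \<omega>^4)"
  using trunc_at[OF entire_diffs[OF entire_pc], of "aP1 k" k 2]
  by (simp add: aP1_def R2P1_def sum2 pc_vals diffs_vals vals_Suc0)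
lemma aQ1_bigo: "aQ1 k \<in> O[at_right 0](\<lambda>\<omega>. \<omega>^4)"
  using trunc_at[OF entire_diffs[OF entire_qc], of "aQ1 k" k 2]
  by (simp add: aQ1_def R2Q1_def sum2 qc_vals diffs_vals vals_Suc0)
lemma R3P0_bigo: "(\<lambda>\<omega>. R3P0 (k * \<omega>^2)) \<in> O[at_right 0](\<lambda>\<omega>. \<omega>^6)"
  using trunc_at[OF entire_pc, of "\<lambda>\<omega>. R3P0 (k * \<omega>^2)" k 3]
  by (simp add: R3P0_def sum3 pc_vals vals_Suc0)
lemma R1P2_bigo: "(\<lambda>\<omega>. R1P2 (k * \<omega>^2)) \<in> O[at_right 0](\<lambda>\<omega>. \<omega>^2)"
  using trunc_at[OF entire_diffs[OF entire_diffs[OF entire_pc]], of "\<lambda>\<omega>. R1P2 (k * \<omega>^2)" k 1]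
  by (simp add: R1P2_def sum1 pc_vals diffs_vals vals_Suc0)
lemma R1Q2_bigo: "(\<lambda>\<omega>. R1Q2 (k * \<omega>^2)) \<in> O[at_right 0](\<lambda>\<omega>. \<omega>^2)"
  using trunc_at[OF entire_diffs[OF entire_diffs[OF entire_qc]], of "\<lambda>\<omega>. R1Q2 (k * \<omega>^2)" k 1]
  by (simp add: R1Q2_def sum1 qc_vals diffs_vals vals_Suc0)

lemma aP0d_bigo: "aP0d T k \<in> O[at_right 0](\<lambda>\<omega>. \<omega>^4)"
proof -
  have r: "(\<lambda>\<omega>::real. 1 / \<omega>^2) \<in> O[at_right 0](\<lambda>\<omega>. 1 / \<omega>^2)" by simp
  have "(\<lambda>\<omega>. R3P0 (k * \<omega>^2) * (1 / \<omega>^2)) \<in> O[at_right 0](\<lambda>\<omega>. \<omega>^6 * (1 / \<omega>^2))"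
    by (rule landau_o.big.mult[OF R3P0_bigo r])
  moreover have "(\<lambda>\<omega>::real. \<omega>^6 * (1 / \<omega>^2)) \<in> O[at_right 0](\<lambda>\<omega>. \<omega>^4)" by real_asymp
  ultimately have "(\<lambda>\<omega>. R3P0 (k * \<omega>^2) * (1 / \<omega>^2)) \<in> O[at_right 0](\<lambda>\<omega>. \<omega>^4)"
    by (rule landau_o.big_trans)
  then have "(\<lambda>\<omega>. (1 / T) * (R3P0 (k * \<omega>^2) * (1 / \<omega>^2))) \<in> O[at_right 0](\<lambda>\<omega>. \<omega>^4)"
    by (rule bigo_cmult)
  moreover have "aP0d T k = (\<lambda>\<omega>. (1 / T) * (R3P0 (k * \<omega>^2) * (1 / \<omega>^2)))"
    by (rule ext) (simp add: aP0d_def)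
  ultimately show ?thesis by simp
qed

lemma aP2_bigo: "aP2 T k \<in> O[at_right 0](\<lambda>\<omega>. \<omega>^4)"
proof -
  have r: "(\<lambda>\<omega>::real. T * \<omega>^2) \<in> O[at_right 0](\<lambda>\<omega>. \<omega>^2)" by (rule bigo_cmult) simp
  have "(\<lambda>\<omega>. (T * \<omega>^2) * R1P2 (k * \<omega>^2)) \<in> O[at_right 0](\<lambda>\<omega>. \<omega>^2 * \<omega>^2)"
    by (rule landau_o.big.mult[OF r R1P2_bigo])
  then show ?thesis unfolding aP2_def[abs_def] by (simp add: power2_eq_square power4_eq_xxxx mult_ac)
qed

lemma aQ2_bigo: "aQ2 T k \<in> O[at_right 0](\<lambda>\<omega>. \<omega>^4)"
proof -
  have r: "(\<lambda>\<omega>::real. T * \<omega>^2) \<in> O[at_right 0](\<lambda>\<omega>. \<omega>^2)" by (rule bigo_cmult) simp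
  have "(\<lambda>\<omega>. (T * \<omega>^2) * R1Q2 (k * \<omega>^2)) \<in> O[at_right 0](\<lambda>\<omega>. \<omega>^2 * \<omega>^2)"
    by (rule landau_o.big.mult[OF r R1Q2_bigo])
  then show ?thesis unfolding aQ2_def[abs_def] by (simp add: power2_eq_square power4_eq_xxxx mult_ac)
qed

lemma lg_bigo:
  assumes "k > 0" shows "lg k \<in> O[at_right 0](\<lambda>\<omega>. ln \<omega>)"
proof -
  have ev: "\<forall>\<^sub>F \<omega> in at_right 0. (ln k / 2 - ln 2 + euler_mascheroni) * 1 + ln \<omega> = lg k \<omega>"
    using eventually_at_right_less[of 0]
  proof (rule eventually_mono)
    fix \<omega> :: real assume "\<omega> > 0"
    then show "(ln k / 2 - ln 2 + euler_mascheroni) * 1 + ln \<omega> = lg k \<omega>"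
      using assms by (simp add: lg_def cL_def ln_mult ln_realpow)
  qed
  have c: "(\<lambda>\<omega>::real. 1) \<in> O[at_right 0](\<lambda>\<omega>. ln \<omega>)" by real_asymp
  have "(\<lambda>\<omega>. (ln k / 2 - ln 2 + euler_mascheroni) * 1 + ln \<omega>) \<in> O[at_right 0](\<lambda>\<omega>. ln \<omega>)"
    by (intro sum_in_bigo bigo_cmult c) simp
  then show ?thesis using landau_o.big.in_cong[OF ev] by simp
qed

lemma w4_w: fixes f :: "real \<Rightarrow> real" shows "f \<in> O[at_right 0](\<lambda>\<omega>. \<omega>^4) \<Longrightarrow> f \<in> O[at_right 0](\<lambda>\<omega>. \<omega>^4 * ln \<omega>)"
proof -
  assume a: "f \<in> O[at_right 0](\<lambda>\<omega>. \<omega>^4)"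
  have "(\<lambda>\<omega>::real. \<omega>^4) \<in> O[at_right 0](\<lambda>\<omega>. \<omega>^4 * ln \<omega>)" by real_asymp
  with a show ?thesis by (rule landau_o.big_trans)
qed

lemma lg_w:
  fixes f :: "real \<Rightarrow> real"
  assumes "k > 0" "f \<in> O[at_right 0](\<lambda>\<omega>. \<omega>^4)"
  shows "(\<lambda>\<omega>. lg k \<omega> * f \<omega>) \<in> O[at_right 0](\<lambda>\<omega>. \<omega>^4 * ln \<omega>)"
proof -
  have "(\<lambda>\<omega>. lg k \<omega> * f \<omega>) \<in> O[at_right 0](\<lambda>\<omega>. ln \<omega> * \<omega>^4)"
    by (rule landau_o.big.mult[OF lg_bigo[OF assms(1)] assms(2)])
  moreover have "(\<lambda>\<omega>::real. ln \<omega> * \<omega>^4) = (\<lambda>\<omega>. \<omega>^4 * ln \<omega>)" by (simp add: mult.commute)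
  ultimately show ?thesis by simp
qed

lemmas atoms_w = aP0_bigo[THEN w4_w] aQ0_bigo[THEN w4_w] aP1_bigo[THEN w4_w] aQ1_bigo[THEN w4_w]
  aP0d_bigo[THEN w4_w] aP2_bigo[THEN w4_w] aQ2_bigo[THEN w4_w]
lemmas atoms_lg = lg_w[OF _ aP0_bigo] lg_w[OF _ aP1_bigo] lg_w[OF _ aP2_bigo]



lemma Re_err_bigo:
  fixes i j :: 2 and x :: "real^2"
  assumes "mu > 0" "lam + 2 * mu > 0" "rho > 0" "\<delta> > 0" "\<epsilon> > 0" "x \<noteq> 0"
  shows "(\<lambda>\<omega>. Re (Gamma_omega (lam / \<delta>) (mu / \<delta>) (rho / \<epsilon>) \<omega> x $ i $ j) - Re (Emat lam mu rho \<delta> (sqrt (\<delta> / \<epsilon>)) \<omega> x $ i $ j))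
     \<in> O[at_right 0](\<lambda>\<omega>. \<omega>^4 * ln \<omega>)"
proof -
  define T where "T \<equiv> (\<delta> / \<epsilon>) * rho"
  define a where "a \<equiv> 1 / mu"
  define b where "b \<equiv> 1 / (lam + 2 * mu)"
  define s0 where "s0 \<equiv> x \<bullet> x"
  define d where "d \<equiv> (if i = j then 1 else 0 :: real)"
  define X where "X \<equiv> x $ i * x $ j"
  have pos: "T * a * s0 > 0" "T * b * s0 > 0"
    using assms by (simp_all add: T_def a_def b_def s0_def)
  have ev: "\<forall>\<^sub>F \<omega> in at_right 0. \<delta> * (d * ((a / 4) * (2 / pi) * (lg (T * a * s0) \<omega> * aP0 (T * a * s0) \<omega> + aQ0 (T * a * s0) \<omega>)
     - (1 / 2) * (2 / pi) * ((aP0d T (T * b * s0) \<omega> - aP0d T (T * a * s0) \<omega>) / (2 * s0)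
        + b * (lg (T * b * s0) \<omega> * aP1 (T * b * s0) \<omega>) - a * (lg (T * a * s0) \<omega> * aP1 (T * a * s0) \<omega>)
        + b * aQ1 (T * b * s0) \<omega> - a * aQ1 (T * a * s0) \<omega>))
     + X * (- (2 / pi) * (- (aP0d T (T * b * s0) \<omega> - aP0d T (T * a * s0) \<omega>) / (2 * s0^2)
        + (b * aP1 (T * b * s0) \<omega> - a * aP1 (T * a * s0) \<omega>) / s0
        + b^2 * (lg (T * b * s0) \<omega> * aP2 T (T * b * s0) \<omega>) - a^2 * (lg (T * a * s0) \<omega> * aP2 T (T * a * s0) \<omega>)
        + b^2 * aQ2 T (T * b * s0) \<omega> - a^2 * aQ2 T (T * a * s0) \<omega>)))
     = Re (Gamma_omega (lam / \<delta>) (mu / \<delta>) (rho / \<epsilon>) \<omega> x $ i $ j) - Re (Emat lam mu rho \<delta> (sqrt (\<delta> / \<epsilon>)) \<omega> x $ i $ j)"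
    by (rule eventually_mono[OF eventually_at_right_less[of 0]])
       (simp add: Re_ident[OF assms(1-5) _ assms(6)] T_def a_def b_def s0_def d_def X_def)
  have "(\<lambda>\<omega>. \<delta> * (d * ((a / 4) * (2 / pi) * (lg (T * a * s0) \<omega> * aP0 (T * a * s0) \<omega> + aQ0 (T * a * s0) \<omega>)
     - (1 / 2) * (2 / pi) * ((aP0d T (T * b * s0) \<omega> - aP0d T (T * a * s0) \<omega>) / (2 * s0)
        + b * (lg (T * b * s0) \<omega> * aP1 (T * b * s0) \<omega>) - a * (lg (T * a * s0) \<omega> * aP1 (T * a * s0) \<omega>)
        + b * aQ1 (T * b * s0) \<omega> - a * aQ1 (T * a * s0) \<omega>))
     + X * (- (2 / pi) * (- (aP0d T (T * b * s0) \<omega> - aP0d T (T * a * s0) \<omega>) / (2 * s0^2)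
        + (b * aP1 (T * b * s0) \<omega> - a * aP1 (T * a * s0) \<omega>) / s0
        + b^2 * (lg (T * b * s0) \<omega> * aP2 T (T * b * s0) \<omega>) - a^2 * (lg (T * a * s0) \<omega> * aP2 T (T * a * s0) \<omega>)
        + b^2 * aQ2 T (T * b * s0) \<omega> - a^2 * aQ2 T (T * a * s0) \<omega>))))
     \<in> O[at_right 0](\<lambda>\<omega>. \<omega>^4 * ln \<omega>)"
    by (intro bigo_cmult sum_in_bigo bigo_cdiv bigo_uminus' atoms_w atoms_lg pos)
  then show ?thesis using landau_o.big.in_cong[OF ev] by simp
qed

lemma Im_err_bigo:
  fixes i j :: 2 and x :: "real^2"
  assumes "mu > 0" "lam + 2 * mu > 0" "rho > 0" "\<delta> > 0" "\<epsilon> > 0" "x \<noteq> 0"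
  shows "(\<lambda>\<omega>. Im (Gamma_omega (lam / \<delta>) (mu / \<delta>) (rho / \<epsilon>) \<omega> x $ i $ j) - Im (Emat lam mu rho \<delta> (sqrt (\<delta> / \<epsilon>)) \<omega> x $ i $ j))
     \<in> O[at_right 0](\<lambda>\<omega>. \<omega>^4 * ln \<omega>)"
proof -
  define T where "T \<equiv> (\<delta> / \<epsilon>) * rho"
  define a where "a \<equiv> 1 / mu"
  define b where "b \<equiv> 1 / (lam + 2 * mu)"
  define s0 where "s0 \<equiv> x \<bullet> x"
  define d where "d \<equiv> (if i = j then 1 else 0 :: real)"
  define X where "X \<equiv> x $ i * x $ j"
  have ev: "\<forall>\<^sub>F \<omega> in at_right 0. \<delta> * (- (a / 4) * d * aP0 (T * a * s0) \<omega> + (1 / 2) * d * (b * aP1 (T * b * s0) \<omega> - a * aP1 (T * a * s0) \<omega>)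
         + X * (b^2 * aP2 T (T * b * s0) \<omega> - a^2 * aP2 T (T * a * s0) \<omega>))
     = Im (Gamma_omega (lam / \<delta>) (mu / \<delta>) (rho / \<epsilon>) \<omega> x $ i $ j) - Im (Emat lam mu rho \<delta> (sqrt (\<delta> / \<epsilon>)) \<omega> x $ i $ j)"
    by (rule eventually_mono[OF eventually_at_right_less[of 0]])
       (simp add: Im_ident[OF assms(1-5) _ assms(6)] T_def a_def b_def s0_def d_def X_def)
  have "(\<lambda>\<omega>. \<delta> * (- (a / 4) * d * aP0 (T * a * s0) \<omega> + (1 / 2) * d * (b * aP1 (T * b * s0) \<omega> - a * aP1 (T * a * s0) \<omega>)
         + X * (b^2 * aP2 T (T * b * s0) \<omega> - a^2 * aP2 T (T * a * s0) \<omega>)))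
     \<in> O[at_right 0](\<lambda>\<omega>. \<omega>^4 * ln \<omega>)"
    by (intro bigo_cmult sum_in_bigo bigo_cdiv bigo_uminus' atoms_w)
  then show ?thesis using landau_o.big.in_cong[OF ev] by simp
qed

lemma norm_vec_le_sum: "norm (v :: 'a::real_normed_vector ^ 'n) \<le> (\<Sum>i\<in>UNIV. norm (v $ i))"
  by (simp add: norm_vec_def L2_set_le_sum)

lemma bigo_le:
  fixes f g h :: "real \<Rightarrow> real"
  assumes "\<And>x. \<bar>f x\<bar> \<le> g x" "g \<in> O[F](h)"
  shows "f \<in> O[F](h)"
proof -
  from assms(2) obtain c where c: "c > 0" "\<forall>\<^sub>F x in F. norm (g x) \<le> c * norm (h x)"
    by (elim landau_o.bigE)
  from c(2) have "\<forall>\<^sub>F x in F. norm (f x) \<le> c * norm (h x)"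
    by eventually_elim (metis abs_ge_self assms(1) order_trans real_norm_def)
  with c(1) show ?thesis by (rule landau_o.bigI)
qed



theorem proposition2p3:
  fixes lam mu rho \<delta> \<epsilon> :: real and x :: "real^2"
  assumes "mu > 0" and "lam + 2 * mu > 0" and "rho > 0"
    and "\<delta> > 0" and "\<epsilon> > 0" and "x \<noteq> 0"
  shows "let \<tau> = sqrt (\<delta> / \<epsilon>) in
    \<exists>C. \<forall>\<^sub>F \<omega> in at_right 0.
      norm (Gamma_omega (lam / \<delta>) (mu / \<delta>) (rho / \<epsilon>) \<omega> x
        - (\<chi> i j.
             \<delta> * Gamma0 lam mu x $ i $ j
           + \<delta> * (alpha1 lam mu * ln (sqrt rho * \<tau> * \<omega>) + alpha_const lam mu)
               * (if i = j then 1 else 0)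
           + \<delta> * \<omega>^2 * ln \<omega> * rho * \<tau>^2 * Gamma1 lam mu x $ i $ j
           + \<delta> * \<omega>^2 * rho * \<tau>^2 * ln (sqrt rho * \<tau>) * Gamma1 lam mu x $ i $ j
           + \<delta> * \<omega>^2 * rho * \<tau>^2 * Gamma2 lam mu x $ i $ j))
      \<le> C * \<bar>\<delta> * \<tau>^4 * \<omega>^4 * ln \<omega> + \<delta> * \<tau>^4 * \<omega>^4\<bar>"
proof -
  define \<tau> where "\<tau> = sqrt (\<delta> / \<epsilon>)"
  have taup: "\<tau> > 0" using assms by (simp add: \<tau>_def)
  let ?M = "\<lambda>\<omega>. Gamma_omega (lam / \<delta>) (mu / \<delta>) (rho / \<epsilon>) \<omega> x - Emat lam mu rho \<delta> \<tau> \<omega> x"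
  have S: "(\<lambda>\<omega>. \<Sum>i\<in>UNIV. \<Sum>j\<in>UNIV. \<bar>Re (?M \<omega> $ i $ j)\<bar> + \<bar>Im (?M \<omega> $ i $ j)\<bar>)
      \<in> O[at_right 0](\<lambda>\<omega>. \<omega>^4 * ln \<omega>)"
    using Re_err_bigo[OF assms] Im_err_bigo[OF assms]
    by (intro big_sum_in_bigo sum_in_bigo) (simp_all add: \<tau>_def)
  have le: "\<bar>norm (?M \<omega>)\<bar> \<le> (\<Sum>i\<in>UNIV. \<Sum>j\<in>UNIV. \<bar>Re (?M \<omega> $ i $ j)\<bar> + \<bar>Im (?M \<omega> $ i $ j)\<bar>)" for \<omega>
  proof -
    have "norm (?M \<omega>) \<le> (\<Sum>i\<in>UNIV. norm (?M \<omega> $ i))" by (rule norm_vec_le_sum)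
    also have "\<dots> \<le> (\<Sum>i\<in>UNIV. \<Sum>j\<in>UNIV. norm (?M \<omega> $ i $ j))"
      by (intro sum_mono norm_vec_le_sum)
    also have "\<dots> \<le> (\<Sum>i\<in>UNIV. \<Sum>j\<in>UNIV. \<bar>Re (?M \<omega> $ i $ j)\<bar> + \<bar>Im (?M \<omega> $ i $ j)\<bar>)"
      by (intro sum_mono cmod_le)
    finally show ?thesis by simp
  qed
  have N: "(\<lambda>\<omega>. norm (?M \<omega>)) \<in> O[at_right 0](\<lambda>\<omega>. \<omega>^4 * ln \<omega>)"
    by (rule bigo_le[OF le S])
  have g: "(\<lambda>\<omega>::real. \<delta> * \<tau>^4 * \<omega>^4 * ln \<omega> + \<delta> * \<tau>^4 * \<omega>^4) = (\<lambda>\<omega>. (\<delta> * \<tau>^4) * (\<omega>^4 * ln \<omega> + \<omega>^4))"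
    by (simp add: algebra_simps)
  have W0: "(\<lambda>\<omega>::real. \<omega>^4 * ln \<omega>) \<in> O[at_right 0](\<lambda>\<omega>. \<omega>^4 * ln \<omega> + \<omega>^4)" by real_asymp
  have W: "(\<lambda>\<omega>::real. \<omega>^4 * ln \<omega>) \<in> O[at_right 0](\<lambda>\<omega>. \<delta> * \<tau>^4 * \<omega>^4 * ln \<omega> + \<delta> * \<tau>^4 * \<omega>^4)"
    unfolding g using W0 assms(4) taup by simp
  from landau_o.big_trans[OF N W] obtain c where c: "c > 0"
    "\<forall>\<^sub>F \<omega> in at_right 0. norm (norm (?M \<omega>)) \<le> c * norm (\<delta> * \<tau>^4 * \<omega>^4 * ln \<omega> + \<delta> * \<tau>^4 * \<omega>^4)"
    by (elim landau_o.bigE)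
  have "\<forall>\<^sub>F \<omega> in at_right 0. norm (?M \<omega>) \<le> c * \<bar>\<delta> * \<tau>^4 * \<omega>^4 * ln \<omega> + \<delta> * \<tau>^4 * \<omega>^4\<bar>"
    using c(2) by simp
  then show ?thesis unfolding Let_def \<tau>_def[symmetric] Emat_def by blast
qed

end
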